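(* Let $r\ge 1$ be an integer, $\mathcal{C}_0 \subseteq \mathbb{F}_2^d$ a linear code with relative distance $\delta$ and $r$'th relative generalized distance $\delta_r$, $G=(L\cup R,E)$ the double cover of a $d$-regular graph on $n$ vertices with expansion $\lambda$, $\varepsilon>0$ with $\frac{\lambda}{d} \leq \frac{\varepsilon^2\delta^2}{2^{r+4}}$, and $z \in (\mathbb{F}_2\cup\{\bot\})^E$ with at most $(1-\varepsilon)\delta\delta_r dn$ coordinates equal to $\bot$. Let $E' \subseteq E$ be the edge set produced by the procedure \textsc{FindHeavyEdges} described in the context, and consider the global equivalence relation $\sim$ on $E'$. Then every global equivalence class in $E'$ has size at least $\frac{\varepsilon^4\delta^4}{2^{2r+7}} dn$. In particular, $E'$ is partitioned into at most $s := \frac{2^{2r+7}}{\varepsilon^4\delta^4}$ equivalence classes.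
   Context: Relative distance of a linear code: minimum relative weight of a nonzero codeword; $r$'th relative generalized distance of $\mathcal{C}_0 \subseteq \mathbb{F}_2^d$: $\frac1d\min_V|\{i:\exists v\in V, v_i\ne 0\}|$ over $r$-dimensional subspaces $V\subseteq\mathcal{C}_0$. For $w\in(\mathbb{F}_2\cup\{\bot\})^d$, $\mathrm{List}_{\mathcal{C}_0}(w)=\{c\in\mathcal{C}_0: c_i=w_i \text{ whenever } w_i\ne\bot\}$. Expansion of a $d$-regular graph: $\max\{\lambda_2,|\lambda_n|\}$ of its adjacency eigenvalues; its double cover $G=(L\cup R,E)$ has $L,R$ copies of the vertex set with $u\in L$, $v\in R$ adjacent iff they are adjacent in the original graph. Fix for each vertex $v$ an ordering $\Gamma_1(v),\dots,\Gamma_d(v)$ of its neighbours. Let $B\subseteq L\cup R$ be the set of vertices $v$ with $z_{(v,u)}=\bot$ for more than $\delta_r d$ neighbours $u$. For $v\notin B$, let $L_v=\mathrm{List}_{\mathcal{C}_0}((z_{(v,\Gamma_1(v))},\dots,z_{(v,\Gamma_d(v))}))$; it is an affine subspace of $\mathbb{F}_2^d$ of some dimension $r_v\le r-1$, and fix $G_v\in\mathbb{F}_2^{d\times r_v}$, $b_v\in\mathbb{F}_2^d$ with $L_v=\{G_vx+b_v: x\in\mathbb{F}_2^{r_v}\}$; the rows of $G_v$ are indexed by the edges incident to $v$. Local equivalence: for $v\notin B$ and edges $(u,v),(w,v)$, write $(u,v)\sim_v(w,v)$ if the rows of $G_v$ indexed by these edges are equal. \textsc{FindHeavyEdges}: start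 with $E'=E$; remove from $E'$ all edges incident to a vertex of $B$; then, as long as there exist an edge $(u,v)\in E'$ (with $v$ either endpoint) such that $|\{(w,v)\in E' : (w,v)\sim_v(u,v)\}| \le \frac{\varepsilon^2\delta^2}{2^{r+3}} d$, remove $(u,v)$ and all $(w,v)\in E'$ with $(w,v)\sim_v(u,v)$ from $E'$; output the final $E'$. Global equivalence: for $e,e'\in E'$, $e\sim e'$ if there is a sequence $e=e_1,\dots,e_t=e'$ of edges in $E'$ such that each consecutive pair $e_i=(u,v)$, $e_{i+1}=(v,w)$ shares a vertex $v$ and satisfies $(u,v)\sim_v(v,w)$. *)

theory Defs
  imports "HOL-Computational_Algebra.Computational_Algebra" "Jordan_Normal_Form.Char_Poly"
begin

text \<open>Words of F_2^d are functions nat => bool vanishing outside {0..<d};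
  addition in F_2 is xor, i.e. (~=) on bool.\<close>

definition words :: "nat \<Rightarrow> (nat \<Rightarrow> bool) set" where
  "words d = {c. \<forall>i\<ge>d. \<not> c i}"

definition zero_word :: "nat \<Rightarrow> bool" where
  "zero_word = (\<lambda>_. False)"

definition add_word :: "(nat \<Rightarrow> bool) \<Rightarrow> (nat \<Rightarrow> bool) \<Rightarrow> (nat \<Rightarrow> bool)" where
  "add_word c c' = (\<lambda>i. c i \<noteq> c' i)"

definition f2_subspace :: "nat \<Rightarrow> (nat \<Rightarrow> bool) set \<Rightarrow> bool" where
  "f2_subspace d V \<longleftrightarrow> V \<subseteq> words d \<and> zero_word \<in> V \<and>
     (\<forall>c\<in>V. \<forall>c'\<in>V. add_word c c' \<in> V)"

abbreviation linear_code :: "nat \<Rightarrow> (nat \<Rightarrow> bool) set \<Rightarrow> bool" where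
  "linear_code d C \<equiv> f2_subspace d C"

text \<open>An F_2-subspace has dimension k iff it has exactly 2^k elements.\<close>
definition f2_dim_eq :: "nat \<Rightarrow> (nat \<Rightarrow> bool) set \<Rightarrow> nat \<Rightarrow> bool" where
  "f2_dim_eq d V k \<longleftrightarrow> f2_subspace d V \<and> card V = 2 ^ k"

definition supp :: "nat \<Rightarrow> (nat \<Rightarrow> bool) \<Rightarrow> nat set" where
  "supp d c = {i. i < d \<and> c i}"

definition rel_dist :: "nat \<Rightarrow> (nat \<Rightarrow> bool) set \<Rightarrow> real" where
  "rel_dist d C = Min {real (card (supp d c)) / real d | c. c \<in> C \<and> c \<noteq> zero_word}"

definition rel_gen_dist :: "nat \<Rightarrow> nat \<Rightarrow> (nat \<Rightarrow> bool) set \<Rightarrow> real" where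
  "rel_gen_dist r d C = Min {real (card {i. i < d \<and> (\<exists>v\<in>V. v i)}) / real d
       | V. V \<subseteq> C \<and> f2_dim_eq d V r}"

text \<open>Partial words: None plays the role of bot.\<close>
definition List_code :: "nat \<Rightarrow> (nat \<Rightarrow> bool) set \<Rightarrow> (nat \<Rightarrow> bool option) \<Rightarrow> (nat \<Rightarrow> bool) set" where
  "List_code d C w = {c \<in> C. \<forall>i<d. w i \<noteq> None \<longrightarrow> c i = the (w i)}"

definition regular_graph :: "nat \<Rightarrow> nat \<Rightarrow> (nat \<Rightarrow> nat \<Rightarrow> bool) \<Rightarrow> bool" where
  "regular_graph n d Adj \<longleftrightarrow>
     (\<forall>u v. Adj u v \<longrightarrow> u < n \<and> v < n) \<and> (\<forall>u v. Adj u v \<longrightarrow> Adj v u) \<and>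
     (\<forall>u. \<not> Adj u u) \<and> (\<forall>u<n. card {v. Adj u v} = d)"

definition adj_matrix :: "nat \<Rightarrow> (nat \<Rightarrow> nat \<Rightarrow> bool) \<Rightarrow> real mat" where
  "adj_matrix n Adj = mat n n (\<lambda>(i, j). if Adj i j then 1 else 0)"

definition adj_eigenvalues :: "nat \<Rightarrow> (nat \<Rightarrow> nat \<Rightarrow> bool) \<Rightarrow> real list" where
  "adj_eigenvalues n Adj = rev (sorted_list_of_multiset (proots (char_poly (adj_matrix n Adj))))"

definition expansion :: "nat \<Rightarrow> (nat \<Rightarrow> nat \<Rightarrow> bool) \<Rightarrow> real" where
  "expansion n Adj = (let ev = adj_eigenvalues n Adj in max (ev ! 1) \<bar>last ev\<bar>)"

text \<open>Double cover: a vertex is (v, False) in L or (v, True) in R; an edge is a pair (u, w)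
  meaning the edge between u in L and w in R, present iff Adj u w.\<close>
type_synonym dvertex = "nat \<times> bool"
type_synonym dedge = "nat \<times> nat"

definition dc_vertices :: "nat \<Rightarrow> dvertex set" where
  "dc_vertices n = {0..<n} \<times> UNIV"

definition dc_edges :: "(nat \<Rightarrow> nat \<Rightarrow> bool) \<Rightarrow> dedge set" where
  "dc_edges Adj = {(u, w). Adj u w}"

definition inc_edge :: "dvertex \<Rightarrow> nat \<Rightarrow> dedge" where
  "inc_edge x w = (if snd x then (w, fst x) else (fst x, w))"

definition endpoints :: "dedge \<Rightarrow> dvertex set" where
  "endpoints e = {(fst e, False), (snd e, True)}"

definition bad_set :: "nat \<Rightarrow> (nat \<Rightarrow> nat \<Rightarrow> bool) \<Rightarrow> real \<Rightarrow> nat \<Rightarrow> (dedge \<Rightarrow> bool option) \<Rightarrow> dvertex set" where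
  "bad_set n Adj \<delta>r d z = {x \<in> dc_vertices n.
      real (card {w. Adj (fst x) w \<and> z (inc_edge x w) = None}) > \<delta>r * real d}"

text \<open>local word at x: (z_(x,Gamma_1(x)), ..., z_(x,Gamma_d(x))), 0-indexed\<close>
definition local_word :: "(dvertex \<Rightarrow> nat \<Rightarrow> nat) \<Rightarrow> (dedge \<Rightarrow> bool option) \<Rightarrow> dvertex \<Rightarrow> nat \<Rightarrow> bool option" where
  "local_word \<Gamma> z x = (\<lambda>i. z (inc_edge x (\<Gamma> x i)))"

text \<open>the affine map y |-> G_x y + b_x, F_2^k -> F_2^d, where the row of G_x for coordinate i
  is the row indexed by the edge (x, Gamma_i(x)); rows are functions nat => bool (columns < k).\<close>
definition aff_map :: "nat \<Rightarrow> nat \<Rightarrow> (nat \<Rightarrow> dedge) \<Rightarrow> (dedge \<Rightarrow> nat \<Rightarrow> bool) \<Rightarrow> (nat \<Rightarrow> bool)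
    \<Rightarrow> (nat \<Rightarrow> bool) \<Rightarrow> (nat \<Rightarrow> bool)" where
  "aff_map d k edge_of G b y =
     (\<lambda>i. i < d \<and> (odd (card {j. j < k \<and> G (edge_of i) j \<and> y j}) \<noteq> b i))"

definition loc_equiv :: "(dvertex \<Rightarrow> dedge \<Rightarrow> nat \<Rightarrow> bool) \<Rightarrow> (dvertex \<Rightarrow> nat) \<Rightarrow> dvertex \<Rightarrow> dedge \<Rightarrow> dedge \<Rightarrow> bool" where
  "loc_equiv G rv x e e' \<longleftrightarrow> x \<in> endpoints e \<and> x \<in> endpoints e' \<and>
     (\<forall>j < rv x. G x e j = G x e' j)"

definition class_at :: "(dvertex \<Rightarrow> dedge \<Rightarrow> nat \<Rightarrow> bool) \<Rightarrow> (dvertex \<Rightarrow> nat) \<Rightarrow> dedge set \<Rightarrow> dvertex \<Rightarrow> dedge \<Rightarrow> dedge set" where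
  "class_at G rv E1 x e = {e' \<in> E1. loc_equiv G rv x e e'}"

text \<open>one removal step with threshold thr (the number eps^2 delta^2 / 2^(r+3) * d)\<close>
definition fhe_step :: "(dvertex \<Rightarrow> dedge \<Rightarrow> nat \<Rightarrow> bool) \<Rightarrow> (dvertex \<Rightarrow> nat) \<Rightarrow> real \<Rightarrow> dedge set \<Rightarrow> dedge set \<Rightarrow> bool" where
  "fhe_step G rv thr E1 E2 \<longleftrightarrow> (\<exists>e\<in>E1. \<exists>x\<in>endpoints e.
      real (card (class_at G rv E1 x e)) \<le> thr \<and> E2 = E1 - class_at G rv E1 x e)"

definition find_heavy_edges_output :: "(dvertex \<Rightarrow> dedge \<Rightarrow> nat \<Rightarrow> bool) \<Rightarrow> (dvertex \<Rightarrow> nat) \<Rightarrow> real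
    \<Rightarrow> dedge set \<Rightarrow> dvertex set \<Rightarrow> dedge set \<Rightarrow> bool" where
  "find_heavy_edges_output G rv thr E B E' \<longleftrightarrow>
     (fhe_step G rv thr)\<^sup>*\<^sup>* {e \<in> E. endpoints e \<inter> B = {}} E' \<and> (\<nexists>E''. fhe_step G rv thr E' E'')"

definition glob_step :: "(dvertex \<Rightarrow> dedge \<Rightarrow> nat \<Rightarrow> bool) \<Rightarrow> (dvertex \<Rightarrow> nat) \<Rightarrow> dedge set \<Rightarrow> dedge rel" where
  "glob_step G rv E' = {(e, e'). e \<in> E' \<and> e' \<in> E' \<and> (\<exists>x. loc_equiv G rv x e e')}"

definition glob_equiv :: "(dvertex \<Rightarrow> dedge \<Rightarrow> nat \<Rightarrow> bool) \<Rightarrow> (dvertex \<Rightarrow> nat) \<Rightarrow> dedge set \<Rightarrow> dedge rel" where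
  "glob_equiv G rv E' = Id_on E' \<union> (glob_step G rv E')\<^sup>+"

end

theory Submission
  imports Defs "Jordan_Normal_Form.Spectral_Radius"
begin

lemma sym_real_eigenvalue:
  fixes A :: "real mat"
  assumes A: "A \<in> carrier_mat n n" and sym: "A\<^sup>T = A" and n: "n > 0"
  shows "\<exists>e v. v \<in> carrier_vec n \<and> v \<noteq> 0\<^sub>v n \<and> A *\<^sub>v v = e \<cdot>\<^sub>v v"
proof -
  let ?Ac = "map_mat complex_of_real A"
  have Ac: "?Ac \<in> carrier_mat n n" using A by auto
  from spectrum_non_empty[OF Ac n] obtain e where "eigenvalue ?Ac e"
    unfolding spectrum_def by auto
  then obtain v where ev: "eigenvector ?Ac v e" unfolding eigenvalue_def by auto
  hence v: "v \<in> carrier_vec n" and v0: "v \<noteq> 0\<^sub>v n" and Av: "?Ac *\<^sub>v v = e \<cdot>\<^sub>v v"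
    unfolding eigenvector_def using Ac by auto
  have symA: "\<And>i j. i < n \<Longrightarrow> j < n \<Longrightarrow> A $$ (j, i) = A $$ (i, j)"
    using sym A by (metis carrier_matD index_transpose_mat(1))
  have comp: "(\<Sum>j<n. complex_of_real (A $$ (i, j)) * v $ j) = e * v $ i" if i: "i < n" for i
  proof -
    have "(?Ac *\<^sub>v v) $ i = e * v $ i" using Av i v by simp
    moreover have "(?Ac *\<^sub>v v) $ i = (\<Sum>j<n. complex_of_real (A $$ (i, j)) * v $ j)"
      using i A v by (auto simp: scalar_prod_def lessThan_atLeast0 intro!: sum.cong)
    ultimately show ?thesis by simp
  qed
  define s where "s = (\<Sum>i<n. cnj (v $ i) * (\<Sum>j<n. complex_of_real (A $$ (i, j)) * v $ j))"
  define N where "N = (\<Sum>i<n. cnj (v $ i) * v $ i)"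
  have sN: "s = e * N" unfolding s_def N_def using comp
    by (simp add: sum_distrib_left mult.commute mult.left_commute)
  have "cnj s = (\<Sum>i<n. \<Sum>j<n. complex_of_real (A $$ (i, j)) * v $ i * cnj (v $ j))"
    unfolding s_def by (simp add: sum_distrib_left mult.commute mult.left_commute)
  also have "\<dots> = (\<Sum>j<n. \<Sum>i<n. complex_of_real (A $$ (i, j)) * v $ i * cnj (v $ j))"
    by (rule sum.swap)
  also have "\<dots> = s" unfolding s_def
    by (auto simp: sum_distrib_left symA mult.commute mult.left_commute intro!: sum.cong)
  finally have cs: "cnj s = s" .
  have Nr: "N = complex_of_real (\<Sum>i<n. (cmod (v $ i))^2)"
    unfolding N_def of_real_sum
    by (rule sum.cong) (simp, subst complex_norm_square, simp add: mult.commute)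
  obtain i where i: "i < n" "v $ i \<noteq> 0" using v v0 by (metis carrier_vecD eq_vecI index_zero_vec)
  have pos: "(\<Sum>i<n. (cmod (v $ i))^2) > 0"
  proof -
    have "(cmod (v $ i))^2 \<le> (\<Sum>i<n. (cmod (v $ i))^2)"
      by (rule member_le_sum) (use i in auto)
    moreover have "(cmod (v $ i))^2 > 0" using i by simp
    ultimately show ?thesis by linarith
  qed
  have "Im s = 0" using cs by (metis Reals_cnj_iff complex_is_Real_iff)
  hence "Im e = 0" using sN Nr pos by simp
  hence e: "e = complex_of_real (Re e)" by (simp add: complex_eq_iff)
  have "poly (char_poly ?Ac) e = 0" using eigenvalue_root_char_poly[OF Ac] \<open>eigenvalue ?Ac e\<close> by simp
  hence "poly (map_poly complex_of_real (char_poly A)) (complex_of_real (Re e)) = 0"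
    using of_real_hom.char_poly_hom[OF A] e by metis
  hence "poly (char_poly A) (Re e) = 0" by simp
  hence "eigenvalue A (Re e)" using eigenvalue_root_char_poly[OF A] by simp
  then obtain w where "eigenvector A w (Re e)" unfolding eigenvalue_def by auto
  thus ?thesis unfolding eigenvector_def using A by auto
qed

lemma householder:
  fixes u :: "real vec"
  assumes u: "u \<in> carrier_vec n" and uu: "u \<bullet> u = 1" and n: "n > 0"
  shows "\<exists>H. H \<in> carrier_mat n n \<and> H\<^sup>T = H \<and> H * H = 1\<^sub>m n \<and> H *\<^sub>v unit_vec n 0 = u"
proof -
  define w where "w = (\<lambda>i. u $ i - (if i = 0 then 1 else 0))"
  define S where "S = (\<Sum>k<n. w k * w k)"
  define c where "c = 2 / S"
  define H where "H = mat n n (\<lambda>(i,j). (if i = j then 1 else 0) - c * w i * w j)"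
  have H: "H \<in> carrier_mat n n" unfolding H_def by simp
  have uu': "(\<Sum>k<n. u $ k * u $ k) = 1" using uu u by (simp add: scalar_prod_def lessThan_atLeast0)
  have S_eq: "S = 2 - 2 * u $ 0"
  proof -
    have "S = (\<Sum>k<n. u $ k * u $ k - 2 * (if k = 0 then u $ k else 0) + (if k = 0 then 1 else 0))"
      unfolding S_def w_def by (rule sum.cong) (auto simp: algebra_simps)
    also have "\<dots> = 1 - 2 * u $ 0 + 1" using n uu'
      by (simp add: sum.distrib sum_subtractf sum_distrib_left[symmetric])
    finally show ?thesis by simp
  qed
  have HT: "H\<^sup>T = H" unfolding H_def by (rule eq_matI) auto
  have HH: "H * H = 1\<^sub>m n"
  proof (rule eq_matI)
    fix i j assume ij: "i < dim_row (1\<^sub>m n :: real mat)" "j < dim_col (1\<^sub>m n :: real mat)"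
    hence i: "i < n" and j: "j < n" by auto
    have "(H * H) $$ (i, j) = (\<Sum>k<n. ((if i = k then 1 else 0) - c * w i * w k) * ((if k = j then 1 else 0) - c * w k * w j))"
      using i j unfolding H_def by (simp add: scalar_prod_def lessThan_atLeast0)
    also have "\<dots> = (\<Sum>k<n. (if k = i then (if k = j then 1 else 0) else 0)
         - (if k = i then c * w k * w j else 0) - (if k = j then c * w i * w k else 0)
         + c * c * w i * w j * (w k * w k))"
      by (rule sum.cong) (auto simp: algebra_simps)
    also have "\<dots> = (if i = j then 1 else 0) - c * w i * w j - c * w i * w j + c * c * w i * w j * S"
      using i j unfolding S_def
      by (simp add: sum.distrib sum_subtractf sum_distrib_left[symmetric] mult.assoc)
    also have "\<dots> = (if i = j then 1 else 0) + c * w i * w j * (c * S - 2)" by (simp add: algebra_simps)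
    also have "\<dots> = (1\<^sub>m n) $$ (i, j)"
    proof (cases "S = 0")
      case True thus ?thesis using i j unfolding c_def by simp
    next
      case False thus ?thesis using i j unfolding c_def by simp
    qed
    finally show "(H * H) $$ (i, j) = (1\<^sub>m n) $$ (i, j)" .
  qed (auto simp: H_def)
  have He: "H *\<^sub>v unit_vec n 0 = u"
  proof (rule eq_vecI)
    fix i assume "i < dim_vec u"
    hence i: "i < n" using u by auto
    have "(H *\<^sub>v unit_vec n 0) $ i = (\<Sum>k<n. ((if i = k then 1 else 0) - c * w i * w k) * (if k = 0 then 1 else 0))"
      using i n unfolding H_def by (simp add: scalar_prod_def lessThan_atLeast0 unit_vec_def)
    also have "\<dots> = (\<Sum>k<n. if k = 0 then ((if i = k then 1 else 0) - c * w i * w k) else 0)"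
      by (rule sum.cong) auto
    also have "\<dots> = (if i = 0 then 1 else 0) - c * w i * w 0"
      using n by simp
    also have "\<dots> = u $ i"
    proof (cases "S = 0")
      case True
      have "w i * w i \<le> S" unfolding S_def by (rule member_le_sum) (use i in auto)
      moreover have "\<forall>k<n. w k * w k \<ge> 0" by simp
      hence "w i * w i = 0" using True i unfolding S_def
        using sum_nonneg_eq_0_iff[of "{..<n}" "\<lambda>k. w k * w k"] by auto
      hence "w i = 0" by simp
      thus ?thesis using True unfolding c_def w_def by simp
    next
      case False
      have "w 0 = u $ 0 - 1" unfolding w_def by simp
      hence "c * w 0 = -1" using False unfolding c_def S_eq by (simp add: field_simps)
      hence "c * w i * w 0 = - w i" by (metis mult.commute mult.left_commute mult_minus1_right)
      thus ?thesis unfolding w_def by simp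
    qed
    finally show "(H *\<^sub>v unit_vec n 0) $ i = u $ i" .
  qed (use u in \<open>auto simp: H_def\<close>)
  show ?thesis using H HT HH He by blast
qed

definition diagm :: "real list \<Rightarrow> real mat" where
  "diagm es = mat (length es) (length es) (\<lambda>(i,j). if i = j then es ! i else 0)"

lemma spectral:
  fixes A :: "real mat"
  assumes "A \<in> carrier_mat n n" and "A\<^sup>T = A"
  shows "\<exists>P es. P \<in> carrier_mat n n \<and> P\<^sup>T * P = 1\<^sub>m n \<and> length es = n \<and> P\<^sup>T * A * P = diagm es"
  using assms
proof (induction n arbitrary: A)
  case 0
  show ?case
    by (rule exI[of _ "1\<^sub>m 0"], rule exI[of _ "[]"]) (insert 0, auto intro!: eq_matI simp: diagm_def)
next
  case (Suc m)
  let ?n = "Suc m"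
  have A: "A \<in> carrier_mat ?n ?n" and symA: "A\<^sup>T = A" by fact+
  obtain e v where v: "v \<in> carrier_vec ?n" "v \<noteq> 0\<^sub>v ?n" and Av: "A *\<^sub>v v = e \<cdot>\<^sub>v v"
    using sym_real_eigenvalue[OF A symA] by auto
  have vv: "v \<bullet> v > 0"
  proof -
    obtain i where i: "i < ?n" "v $ i \<noteq> 0" using v by (metis carrier_vecD eq_vecI index_zero_vec)
    have "v \<bullet> v = (\<Sum>k<?n. v $ k * v $ k)" using v by (simp add: scalar_prod_def lessThan_atLeast0)
    moreover have "v $ i * v $ i \<le> (\<Sum>k<?n. v $ k * v $ k)" by (rule member_le_sum) (use i in auto)
    moreover have "v $ i * v $ i > 0" using i not_real_square_gt_zero by blast
    ultimately show ?thesis by linarith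
  qed
  define u where "u = (1 / sqrt (v \<bullet> v)) \<cdot>\<^sub>v v"
  have u: "u \<in> carrier_vec ?n" unfolding u_def using v by simp
  have uu: "u \<bullet> u = 1" unfolding u_def using v vv
    by (simp add: smult_scalar_prod_distrib scalar_prod_smult_distrib[of _ ?n] real_sqrt_mult[symmetric])
  have Au: "A *\<^sub>v u = e \<cdot>\<^sub>v u" unfolding u_def using Av v A
    by (simp add: mult_mat_vec smult_smult_assoc mult.commute)
  obtain H where H: "H \<in> carrier_mat ?n ?n" and HT: "H\<^sup>T = H" and HH: "H * H = 1\<^sub>m ?n"
     and He: "H *\<^sub>v unit_vec ?n 0 = u"
    using householder[OF u uu] by auto
  define A' where "A' = H * A * H"
  have A': "A' \<in> carrier_mat ?n ?n" unfolding A'_def using H A by simp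
  have symA': "A'\<^sup>T = A'"
  proof -
    have "A'\<^sup>T = H\<^sup>T * (H * A)\<^sup>T" unfolding A'_def
      using H A by (metis mult_carrier_mat transpose_mult)
    also have "(H * A)\<^sup>T = A\<^sup>T * H\<^sup>T" using H A by (metis transpose_mult)
    finally show ?thesis unfolding A'_def using HT symA H A
      by (metis assoc_mult_mat)
  qed
  have Ae: "A' *\<^sub>v unit_vec ?n 0 = e \<cdot>\<^sub>v unit_vec ?n 0"
  proof -
    have "A' *\<^sub>v unit_vec ?n 0 = H *\<^sub>v (A *\<^sub>v (H *\<^sub>v unit_vec ?n 0))"
      unfolding A'_def
      using assoc_mult_mat_vec[of "H * A" ?n ?n H ?n "unit_vec ?n 0"] assoc_mult_mat_vec[of H ?n ?n A ?n "H *\<^sub>v unit_vec ?n 0"] H A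
      by simp
    also have "\<dots> = e \<cdot>\<^sub>v (H *\<^sub>v u)" using He Au H u by (simp add: mult_mat_vec)
    also have "H *\<^sub>v u = (H * H) *\<^sub>v unit_vec ?n 0" using He H by (simp add: assoc_mult_mat_vec[of _ ?n ?n])
    also have "\<dots> = unit_vec ?n 0" using HH by simp
    finally show ?thesis .
  qed
  have col0: "A' $$ (i, 0) = (if i = 0 then e else 0)" if i: "i < ?n" for i
  proof -
    have "(A' *\<^sub>v unit_vec ?n 0) $ i = A' $$ (i, 0)" using A' i by simp
    thus ?thesis using Ae i by (cases "i = 0") auto
  qed
  have row0: "A' $$ (0, j) = (if j = 0 then e else 0)" if j: "j < ?n" for j
    using col0[OF j] symA' A' j by (metis carrier_matD index_transpose_mat(1) zero_less_Suc)
  define A3 where "A3 = mat m m (\<lambda>(i,j). A' $$ (Suc i, Suc j))"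
  have A3: "A3 \<in> carrier_mat m m" unfolding A3_def by simp
  have symA3: "A3\<^sup>T = A3" unfolding A3_def
    by (rule eq_matI) (use symA' A' in \<open>auto, metis carrier_matD index_transpose_mat(1) Suc_less_eq\<close>)
  obtain P3 es3 where P3: "P3 \<in> carrier_mat m m" and P3P3: "P3\<^sup>T * P3 = 1\<^sub>m m"
    and les3: "length es3 = m" and D3: "P3\<^sup>T * A3 * P3 = diagm es3"
    using Suc.IH[OF A3 symA3] by auto
  define X where "X = four_block_mat (1\<^sub>m 1) (0\<^sub>m 1 m) (0\<^sub>m m 1) P3"
  have X: "X \<in> carrier_mat ?n ?n" unfolding X_def using P3 by auto
  have XT: "X\<^sup>T = four_block_mat (1\<^sub>m 1) (0\<^sub>m 1 m) (0\<^sub>m m 1) P3\<^sup>T"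
    unfolding X_def using P3 by (simp add: transpose_four_block_mat[of _ 1 1 _ m _ m])
  have A'b: "A' = four_block_mat (mat 1 1 (\<lambda>_. e)) (0\<^sub>m 1 m) (0\<^sub>m m 1) A3"
    by (rule eq_matI) (use A' col0 row0 in \<open>auto simp: A3_def\<close>)
  have XX: "X\<^sup>T * X = 1\<^sub>m ?n"
  proof -
    have "X\<^sup>T * X = four_block_mat (1\<^sub>m 1) (0\<^sub>m 1 m) (0\<^sub>m m 1) (P3\<^sup>T * P3)"
      unfolding XT unfolding X_def using P3
      by (subst mult_four_block_mat, auto)
    also have "\<dots> = 1\<^sub>m (1 + m)" unfolding P3P3 by simp
    finally show ?thesis by simp
  qed
  have XAX: "X\<^sup>T * A' * X = diagm (e # es3)"
  proof -
    have "X\<^sup>T * A' = four_block_mat (mat 1 1 (\<lambda>_. e)) (0\<^sub>m 1 m) (0\<^sub>m m 1) (P3\<^sup>T * A3)"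
      unfolding XT A'b using P3 A3
      by (subst mult_four_block_mat, auto)
    hence "X\<^sup>T * A' * X = four_block_mat (mat 1 1 (\<lambda>_. e)) (0\<^sub>m 1 m) (0\<^sub>m m 1) (P3\<^sup>T * A3) * X"
      by simp
    also have "\<dots> = four_block_mat (mat 1 1 (\<lambda>_. e)) (0\<^sub>m 1 m) (0\<^sub>m m 1) (P3\<^sup>T * A3 * P3)"
      unfolding X_def using P3 A3
      by (subst mult_four_block_mat, auto)
    also have "\<dots> = diagm (e # es3)" unfolding D3
      by (rule eq_matI) (auto simp: diagm_def les3)
    finally show ?thesis .
  qed
  define P where "P = H * X"
  have P: "P \<in> carrier_mat ?n ?n" unfolding P_def using H X by simp
  have PT: "P\<^sup>T = X\<^sup>T * H" unfolding P_def using H X HT by (simp add: transpose_mult)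
  have XTc: "X\<^sup>T \<in> carrier_mat ?n ?n" using X by simp
  have "P\<^sup>T * P = X\<^sup>T * (H * H) * X" unfolding PT unfolding P_def using H X XTc
    by (simp add: assoc_mult_mat[of _ ?n ?n _ ?n _ ?n])
  hence PP: "P\<^sup>T * P = 1\<^sub>m ?n" using HH XX XTc by simp
  have "P\<^sup>T * A * P = X\<^sup>T * (H * A * H) * X" unfolding PT unfolding P_def using H X XTc A
    by (simp add: assoc_mult_mat[of _ ?n ?n _ ?n _ ?n])
  hence PAP: "P\<^sup>T * A * P = diagm (e # es3)" using XAX unfolding A'_def by simp
  show ?case using P PP PAP les3 by (intro exI[of _ P] exI[of _ "e # es3"]) auto
qed

lemma proots_linear_prod: "proots (\<Prod>a\<leftarrow>es. [:- a, 1:]) = mset (es :: real list)"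
proof (induction es)
  case (Cons a es)
  have "(\<Prod>a\<leftarrow>es. [:- a, 1:]) \<noteq> 0" by (auto simp: prod_list_zero_iff)
  hence "proots ([:- a, 1:] * (\<Prod>a\<leftarrow>es. [:- a, 1:])) = proots [:- a, 1:] + proots (\<Prod>a\<leftarrow>es. [:- a, 1:])"
    by (intro proots_mult) auto
  moreover have "proots [:- a, 1:] = {#a#}" using proots_linear_factor[of "-a"] by simp
  ultimately show ?case using Cons by simp
qed simp

lemma diagm_carrier[simp]: "diagm es \<in> carrier_mat (length es) (length es)"
  by (simp add: diagm_def)

lemma diagm_char_poly: "char_poly (diagm es) = (\<Prod>a\<leftarrow>es. [:- a, 1:])"
proof -
  have "upper_triangular (diagm es)" by (auto simp: upper_triangular_def diagm_def)
  from char_poly_upper_triangular[OF diagm_carrier this]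
  have "char_poly (diagm es) = (\<Prod>a\<leftarrow>diag_mat (diagm es). [:- a, 1:])" .
  moreover have "diag_mat (diagm es) = es"
    by (rule nth_equalityI) (auto simp: diag_mat_def diagm_def)
  ultimately show ?thesis by simp
qed

lemma spectral2:
  fixes A :: "real mat"
  assumes A: "A \<in> carrier_mat n n" and sym: "A\<^sup>T = A"
  obtains P es where "P \<in> carrier_mat n n" "P\<^sup>T * P = 1\<^sub>m n" "P * P\<^sup>T = 1\<^sub>m n" "length es = n"
    "P\<^sup>T * A * P = diagm es" "A = P * diagm es * P\<^sup>T"
    "proots (char_poly A) = mset es"
proof -
  obtain P es where P: "P \<in> carrier_mat n n" and PP: "P\<^sup>T * P = 1\<^sub>m n" and les: "length es = n"
    and D: "P\<^sup>T * A * P = diagm es"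
    using spectral[OF A sym] by auto
  have PT: "P\<^sup>T \<in> carrier_mat n n" using P by simp
  have PP': "P * P\<^sup>T = 1\<^sub>m n" using mat_mult_left_right_inverse[OF PT P PP] .
  have Dc: "diagm es \<in> carrier_mat n n" using les diagm_carrier[of es] by simp
  have "P * diagm es * P\<^sup>T = P * (P\<^sup>T * A * P) * P\<^sup>T" using D by simp
  also have "\<dots> = (P * P\<^sup>T) * A * (P * P\<^sup>T)" using P PT A
    by (simp add: assoc_mult_mat[of _ n n _ n _ n])
  also have "\<dots> = A" using PP' A by simp
  finally have AD: "A = P * diagm es * P\<^sup>T" by simp
  have sub: "{A, diagm es, P, P\<^sup>T} \<subseteq> carrier_mat n n" using A Dc P PT by auto
  have dA: "dim_row A = n" using A by auto
  have "similar_mat_wit A (diagm es) P P\<^sup>T"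
    unfolding similar_mat_wit_def Let_def dA using sub PP PP' AD[symmetric] by simp
  hence "similar_mat A (diagm es)" unfolding similar_mat_def by blast
  hence "char_poly A = char_poly (diagm es)" by (rule char_poly_similar)
  hence "proots (char_poly A) = mset es" by (simp add: diagm_char_poly proots_linear_prod)
  thus ?thesis using that P PP PP' les D AD by blast
qed

lemma count_above_second:
  fixes es :: "real list"
  assumes les: "length es = n" and n: "n \<ge> 2"
  shows "card {i. i < n \<and> es ! i > rev (sort es) ! 1} \<le> 1"
proof -
  define s where "s = sort es"
  define \<mu> where "\<mu> = rev s ! 1"
  have ls: "length s = n" unfolding s_def using les by simp
  have srt: "sorted s" unfolding s_def by simp
  have mu: "\<mu> = s ! (n - 2)" unfolding \<mu>_def using ls n by (simp add: rev_nth numeral_2_eq_2)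
  have "card {i. i < n \<and> es ! i > \<mu>} = length (filter (\<lambda>x. x > \<mu>) es)"
    using les by (simp add: length_filter_conv_card)
  also have "\<dots> = size (filter_mset (\<lambda>x. x > \<mu>) (mset es))"
    by (metis mset_filter size_mset)
  also have "mset es = mset s" unfolding s_def by simp
  also have "size (filter_mset (\<lambda>x. x > \<mu>) (mset s)) = length (filter (\<lambda>x. x > \<mu>) s)"
    by (metis mset_filter size_mset)
  also have "\<dots> = card {i. i < n \<and> s ! i > \<mu>}"
    using ls by (simp add: length_filter_conv_card)
  also have "\<dots> \<le> card {n - 1}"
  proof (rule card_mono)
    show "{i. i < n \<and> \<mu> < s ! i} \<subseteq> {n - 1}"
    proof
      fix i assume i: "i \<in> {i. i < n \<and> \<mu> < s ! i}"
      have "i = n - 1"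
      proof (rule ccontr)
        assume "i \<noteq> n - 1"
        hence "i \<le> n - 2" using i by auto
        hence "s ! i \<le> s ! (n - 2)" using srt ls n by (intro sorted_nth_mono) auto
        thus False using i mu by auto
      qed
      thus "i \<in> {n - 1}" by simp
    qed
  qed simp
  finally show ?thesis unfolding \<mu>_def s_def by simp
qed

lemma last_rev_sort_le:
  fixes es :: "real list"
  assumes "i < length es"
  shows "last (rev (sort es)) \<le> es ! i"
proof -
  have ne: "sort es \<noteq> []" using assms by (cases es) auto
  have "last (rev (sort es)) = sort es ! 0" using ne by (simp add: last_rev hd_conv_nth)
  moreover obtain j where j: "j < length (sort es)" "sort es ! j = es ! i"
    using assms by (metis in_set_conv_nth nth_mem set_sort)
  moreover have "sort es ! 0 \<le> sort es ! j" using j by (intro sorted_nth_mono) auto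
  ultimately show ?thesis by simp
qed

lemma rayleigh_core:
  fixes es :: "real list" and y c :: "nat \<Rightarrow> real"
  assumes les: "length es = n"
    and cnt: "card {i. i < n \<and> es ! i > \<mu>} \<le> 1"
    and le_d: "\<And>i. i < n \<Longrightarrow> es ! i \<le> d"
    and ceig: "\<And>i. i < n \<Longrightarrow> es ! i * c i = d * c i"
    and cnz: "j < n" "c j \<noteq> 0"
    and orth: "(\<Sum>i<n. y i * c i) = 0"
  shows "(\<Sum>i<n. es ! i * (y i)^2) \<le> \<mu> * (\<Sum>i<n. (y i)^2)"
proof (cases "\<exists>k<n. es ! k > \<mu>")
  case False
  hence "(\<Sum>i<n. es ! i * (y i)^2) \<le> (\<Sum>i<n. \<mu> * (y i)^2)"
    by (intro sum_mono mult_right_mono) auto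
  thus ?thesis by (simp add: sum_distrib_left)
next
  case True
  then obtain k where k: "k < n" "es ! k > \<mu>" by auto
  have fin: "finite {i. i < n \<and> es ! i > \<mu>}" by simp
  have only: "i = k" if "i < n" "es ! i > \<mu>" for i
  proof (rule ccontr)
    assume "i \<noteq> k"
    hence "{i, k} \<subseteq> {i. i < n \<and> es ! i > \<mu>}" using that k by auto
    from card_mono[OF fin this] have "card {i, k} \<le> 1" using cnt by linarith
    thus False using \<open>i \<noteq> k\<close> by simp
  qed
  have ej: "es ! j = d" using ceig[OF cnz(1)] cnz(2) by simp
  have jk: "j = k"
  proof (rule ccontr)
    assume "j \<noteq> k"
    hence "es ! j \<le> \<mu>" using only cnz(1) by force
    thus False using ej le_d[OF k(1)] k(2) by linarith
  qed
  have c0: "c i = 0" if "i < n" "i \<noteq> k" for i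
  proof -
    have "es ! i \<le> \<mu>" using only that by force
    moreover have "es ! k = d" using ej jk by simp
    ultimately have "es ! i \<noteq> d" using k by linarith
    thus ?thesis using ceig[OF that(1)] by auto
  qed
  have "(\<Sum>i<n. y i * c i) = (\<Sum>i<n. if i = k then y k * c k else 0)"
    by (rule sum.cong) (auto simp: c0)
  also have "\<dots> = y k * c k" using k by simp
  finally have "y k = 0" using orth cnz jk by simp
  hence "(\<Sum>i<n. es ! i * (y i)^2) \<le> (\<Sum>i<n. \<mu> * (y i)^2)"
    using only by (intro sum_mono) (force intro: mult_right_mono)
  thus ?thesis by (simp add: sum_distrib_left)
qed

lemma diagm_quad:
  assumes w: "w \<in> carrier_vec (length es)"
  shows "w \<bullet> (diagm es *\<^sub>v w) = (\<Sum>i<length es. es ! i * (w $ i)^2)"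
proof -
  have "(diagm es *\<^sub>v w) $ i = es ! i * w $ i" if i: "i < length es" for i
  proof -
    have "(diagm es *\<^sub>v w) $ i = (\<Sum>j<length es. (if i = j then es ! i else 0) * w $ j)"
      using i w by (simp add: diagm_def scalar_prod_def lessThan_atLeast0)
    also have "\<dots> = (\<Sum>j<length es. if j = i then es ! i * w $ i else 0)"
      by (rule sum.cong) auto
    finally show ?thesis using i by simp
  qed
  note entry = this
  have dimv: "dim_vec (diagm es *\<^sub>v w) = length es" by (simp add: diagm_def)
  have "w \<bullet> (diagm es *\<^sub>v w) = (\<Sum>i \<in> {0..<length es}. w $ i * (diagm es *\<^sub>v w) $ i)"
    by (simp only: scalar_prod_def dimv)
  also have "\<dots> = (\<Sum>i<length es. es ! i * (w $ i)^2)"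
    unfolding lessThan_atLeast0[symmetric]
    by (rule sum.cong) (auto simp: entry power2_eq_square)
  finally show ?thesis .
qed

lemma vec_sq: "(w :: real vec) \<in> carrier_vec n \<Longrightarrow> w \<bullet> w = (\<Sum>i<n. (w $ i)^2)"
  unfolding scalar_prod_def power2_eq_square by (simp add: lessThan_atLeast0)

lemma rayleigh:
  fixes A :: "real mat"
  assumes A: "A \<in> carrier_mat n n" and sym: "A\<^sup>T = A" and n: "n \<ge> 2"
    and one: "A *\<^sub>v vec n (\<lambda>_. 1) = d \<cdot>\<^sub>v vec n (\<lambda>_. 1)"
    and quad: "\<And>z. z \<in> carrier_vec n \<Longrightarrow> z \<bullet> (A *\<^sub>v z) \<le> d * (z \<bullet> z)"
    and x: "x \<in> carrier_vec n" and xo: "x \<bullet> vec n (\<lambda>_. 1) = 0"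
    and ev: "ev = rev (sorted_list_of_multiset (proots (char_poly A)))"
  shows "x \<bullet> (A *\<^sub>v x) \<le> ev ! 1 * (x \<bullet> x) \<and> last ev * (x \<bullet> x) \<le> x \<bullet> (A *\<^sub>v x)"
proof -
  obtain P es where P: "P \<in> carrier_mat n n" and PP: "P\<^sup>T * P = 1\<^sub>m n" and PP': "P * P\<^sup>T = 1\<^sub>m n"
    and les: "length es = n" and D: "P\<^sup>T * A * P = diagm es" and AD: "A = P * diagm es * P\<^sup>T"
    and pr: "proots (char_poly A) = mset es"
    using spectral2[OF A sym] by metis
  have ev': "ev = rev (sort es)" using ev pr by simp
  define Dm where "Dm = diagm es"
  have Dc: "Dm \<in> carrier_mat n n" unfolding Dm_def using les diagm_carrier[of es] by simp
  have PT: "P\<^sup>T \<in> carrier_mat n n" using P by simp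
  define one where "one = vec n (\<lambda>_. 1 :: real)"
  have onec: "one \<in> carrier_vec n" unfolding one_def by simp
  have tr1: "z \<bullet> (A *\<^sub>v z) = (P\<^sup>T *\<^sub>v z) \<bullet> (Dm *\<^sub>v (P\<^sup>T *\<^sub>v z))" if z: "z \<in> carrier_vec n" for z
  proof -
    have "A *\<^sub>v z = P *\<^sub>v (Dm *\<^sub>v (P\<^sup>T *\<^sub>v z))"
      unfolding AD Dm_def[symmetric]
      using assoc_mult_mat_vec[of "P * Dm" n n "P\<^sup>T" n z] assoc_mult_mat_vec[of P n n Dm n "P\<^sup>T *\<^sub>v z"]
        P PT Dc z by simp
    moreover have "z \<bullet> (P *\<^sub>v w) = (P\<^sup>T *\<^sub>v z) \<bullet> w" if "w \<in> carrier_vec n" for w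
      using transpose_vec_mult_scalar[OF P that z] by simp
    ultimately show ?thesis using Dc PT z by simp
  qed
  have tr2: "z \<bullet> z = (P\<^sup>T *\<^sub>v z) \<bullet> (P\<^sup>T *\<^sub>v z)" if z: "z \<in> carrier_vec n" for z
  proof -
    have "(P\<^sup>T *\<^sub>v z) \<bullet> (P\<^sup>T *\<^sub>v z) = z \<bullet> (P *\<^sub>v (P\<^sup>T *\<^sub>v z))"
      using transpose_vec_mult_scalar[OF P _ z, of "P\<^sup>T *\<^sub>v z"] PT z by simp
    also have "P *\<^sub>v (P\<^sup>T *\<^sub>v z) = z" using assoc_mult_mat_vec[OF P PT z, symmetric] PP' z by simp
    finally show ?thesis by simp
  qed
  have le_d: "es ! i \<le> d" if i: "i < n" for i
  proof -
    define z where "z = P *\<^sub>v unit_vec n i"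
    have z: "z \<in> carrier_vec n" unfolding z_def using P by simp
    have Pz: "P\<^sup>T *\<^sub>v z = unit_vec n i"
      unfolding z_def using assoc_mult_mat_vec[OF PT P, of "unit_vec n i", symmetric] PP by simp
    have "z \<bullet> (A *\<^sub>v z) = es ! i"
    proof -
      have "z \<bullet> (A *\<^sub>v z) = (\<Sum>k<n. es ! k * ((unit_vec n i) $ k)^2)"
        unfolding tr1[OF z] Pz Dm_def using diagm_quad[of "unit_vec n i" es] les by simp
      also have "\<dots> = (\<Sum>k<n. if k = i then es ! i else 0)"
        by (rule sum.cong) (auto simp: unit_vec_def)
      finally show ?thesis using i by simp
    qed
    moreover have "z \<bullet> z = 1" unfolding tr2[OF z] Pz using i by simp
    ultimately show ?thesis using quad[OF z] by simp
  qed
  define c where "c = P\<^sup>T *\<^sub>v one"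
  have c: "c \<in> carrier_vec n" unfolding c_def using PT onec by simp
  have Dcc: "Dm *\<^sub>v c = d \<cdot>\<^sub>v c"
  proof -
    have "Dm *\<^sub>v c = (P\<^sup>T * A * P) *\<^sub>v c" unfolding Dm_def D ..
    also have "\<dots> = P\<^sup>T *\<^sub>v (A *\<^sub>v (P *\<^sub>v c))"
      using assoc_mult_mat_vec[of "P\<^sup>T * A" n n P n c] assoc_mult_mat_vec[of "P\<^sup>T" n n A n "P *\<^sub>v c"] PT A P c
      by simp
    also have "P *\<^sub>v c = one" unfolding c_def using assoc_mult_mat_vec[OF P PT onec, symmetric] PP' onec by simp
    also have "A *\<^sub>v one = d \<cdot>\<^sub>v one" using one unfolding one_def .
    also have "P\<^sup>T *\<^sub>v (d \<cdot>\<^sub>v one) = d \<cdot>\<^sub>v c" unfolding c_def using PT onec by (simp add: mult_mat_vec)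
    finally show ?thesis .
  qed
  have ceig: "es ! i * c $ i = d * c $ i" if i: "i < n" for i
  proof -
    have "(Dm *\<^sub>v c) $ i = d * c $ i" using Dcc i c by simp
    moreover have "(Dm *\<^sub>v c) $ i = (\<Sum>j<n. (if i = j then es ! i else 0) * c $ j)"
      using i c les Dc unfolding Dm_def by (simp add: diagm_def scalar_prod_def lessThan_atLeast0)
    moreover have "(\<Sum>j<n. (if i = j then es ! i else 0) * c $ j) = (\<Sum>j<n. if j = i then es ! i * c $ i else 0)"
      by (rule sum.cong) auto
    ultimately show ?thesis using i by simp
  qed
  obtain j where j: "j < n" "c $ j \<noteq> 0"
  proof (rule ccontr)
    assume "\<not> thesis"
    hence "\<forall>j<n. c $ j = 0" using that by blast
    hence "(P *\<^sub>v c) $ 0 = 0" using P c n by (simp add: scalar_prod_def)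
    moreover have "P *\<^sub>v c = one" unfolding c_def using assoc_mult_mat_vec[OF P PT onec, symmetric] PP' onec by simp
    ultimately have "one $ 0 = 0" by simp
    thus False using n unfolding one_def by simp
  qed
  define y where "y = P\<^sup>T *\<^sub>v x"
  have y: "y \<in> carrier_vec n" unfolding y_def using PT x by simp
  have orth: "(\<Sum>i<n. y $ i * c $ i) = 0"
  proof -
    have "y \<bullet> c = x \<bullet> (P *\<^sub>v c)" unfolding y_def using transpose_vec_mult_scalar[OF P c x] by simp
    also have "P *\<^sub>v c = one" unfolding c_def using assoc_mult_mat_vec[OF P PT onec, symmetric] PP' onec by simp
    finally have "y \<bullet> c = 0" using xo unfolding one_def by simp
    thus ?thesis using c by (simp add: scalar_prod_def lessThan_atLeast0)
  qed
  have xAx: "x \<bullet> (A *\<^sub>v x) = (\<Sum>i<n. es ! i * (y $ i)^2)"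
    unfolding tr1[OF x] y_def[symmetric] Dm_def using diagm_quad[of y es] y les by simp
  have xx: "x \<bullet> x = (\<Sum>i<n. (y $ i)^2)" unfolding tr2[OF x] y_def[symmetric] using vec_sq[OF y] .
  have up: "(\<Sum>i<n. es ! i * (y $ i)^2) \<le> ev ! 1 * (\<Sum>i<n. (y $ i)^2)"
    unfolding ev'
    by (rule rayleigh_core[OF les count_above_second[OF les n] le_d ceig j orth])
  have lo: "last ev * (\<Sum>i<n. (y $ i)^2) \<le> (\<Sum>i<n. es ! i * (y $ i)^2)"
  proof -
    have "last ev * (\<Sum>i<n. (y $ i)^2) = (\<Sum>i<n. last ev * (y $ i)^2)" by (simp add: sum_distrib_left)
    also have "\<dots> \<le> (\<Sum>i<n. es ! i * (y $ i)^2)"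
      unfolding ev' using last_rev_sort_le les by (intro sum_mono mult_right_mono) auto
    finally show ?thesis .
  qed
  show ?thesis using up lo xAx xx by simp
qed

context
  fixes n d :: nat and Adj :: "nat \<Rightarrow> nat \<Rightarrow> bool"
  assumes graph: "regular_graph n d Adj"
begin

definition a :: "nat \<Rightarrow> nat \<Rightarrow> real" where "a i j = (if Adj i j then 1 else 0)"

lemma adj_bound: "Adj u v \<Longrightarrow> u < n \<and> v < n" using graph unfolding regular_graph_def by blast
lemma adj_sym: "Adj u v \<Longrightarrow> Adj v u" using graph unfolding regular_graph_def by blast
lemma a_sym: "a i j = a j i" unfolding a_def using adj_sym by auto

lemma row_sum: "i < n \<Longrightarrow> (\<Sum>j<n. a i j) = real d"
proof -
  assume i: "i < n"
  have "(\<Sum>j<n. a i j) = real (card {j. j < n \<and> Adj i j})"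
    unfolding a_def by (simp add: sum.If_cases[of "{..<n}"] Int_def conj_commute)
  also have "{j. j < n \<and> Adj i j} = {j. Adj i j}" using adj_bound by auto
  also have "card {j. Adj i j} = d" using graph i unfolding regular_graph_def by blast
  finally show ?thesis .
qed

lemma col_sum: "j < n \<Longrightarrow> (\<Sum>i<n. a i j) = real d"
proof -
  assume j: "j < n"
  have "(\<Sum>i<n. a i j) = (\<Sum>i<n. a j i)" by (rule sum.cong) (auto simp: a_sym)
  thus ?thesis using row_sum[OF j] by simp
qed

lemma quad_le: "(\<Sum>i<n. \<Sum>j<n. a i j * f i * f j) \<le> real d * (\<Sum>i<n. (f i)^2)"
proof -
  have "(\<Sum>i<n. \<Sum>j<n. a i j * f i * f j) \<le> (\<Sum>i<n. \<Sum>j<n. a i j * ((f i)^2 + (f j)^2) / 2)"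
  proof (intro sum_mono)
    fix i j
    have "f i * f j \<le> ((f i)^2 + (f j)^2) / 2" using sum_squares_bound[of "f i" "f j"]
      by (simp add: power2_eq_square)
    moreover have "a i j \<ge> 0" unfolding a_def by simp
    ultimately show "a i j * f i * f j \<le> a i j * ((f i)^2 + (f j)^2) / 2"
      by (metis (no_types, opaque_lifting) mult.assoc mult_left_mono times_divide_eq_right)
  qed
  also have "\<dots> = ((\<Sum>i<n. (f i)^2 * (\<Sum>j<n. a i j)) + (\<Sum>j<n. (f j)^2 * (\<Sum>i<n. a i j))) / 2"
  proof -
    have "(\<Sum>i<n. \<Sum>j<n. a i j * ((f i)^2 + (f j)^2) / 2)
       = ((\<Sum>i<n. \<Sum>j<n. a i j * (f i)^2) + (\<Sum>i<n. \<Sum>j<n. a i j * (f j)^2)) / 2"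
      by (simp add: sum.distrib sum_divide_distrib[symmetric] distrib_left add_divide_distrib)
    also have "(\<Sum>i<n. \<Sum>j<n. a i j * (f j)^2) = (\<Sum>j<n. \<Sum>i<n. a i j * (f j)^2)" by (rule sum.swap)
    finally show ?thesis by (simp add: sum_distrib_left sum_distrib_right mult.commute)
  qed
  also have "\<dots> = real d * (\<Sum>i<n. (f i)^2)"
    by (simp add: row_sum col_sum sum_distrib_left mult.commute)
  finally show ?thesis .
qed

definition Q :: "(nat \<Rightarrow> real) \<Rightarrow> real" where "Q f = (\<Sum>i<n. \<Sum>j<n. a i j * f i * f j)"
definition Bf :: "(nat \<Rightarrow> real) \<Rightarrow> (nat \<Rightarrow> real) \<Rightarrow> real" where
  "Bf f g = (\<Sum>i<n. \<Sum>j<n. a i j * f i * g j)"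

lemma adjm_carrier: "adj_matrix n Adj \<in> carrier_mat n n" unfolding adj_matrix_def by simp
lemma adjm_index: "i < n \<Longrightarrow> j < n \<Longrightarrow> adj_matrix n Adj $$ (i, j) = a i j"
  unfolding adj_matrix_def a_def by simp
lemma adjm_sym: "(adj_matrix n Adj)\<^sup>T = adj_matrix n Adj"
  by (rule eq_matI) (auto simp: adjm_index a_sym adj_matrix_def intro: adj_sym)

lemma adjm_mult: "i < n \<Longrightarrow> (adj_matrix n Adj *\<^sub>v vec n f) $ i = (\<Sum>j<n. a i j * f j)"
  by (simp add: adj_matrix_def a_def scalar_prod_def lessThan_atLeast0)

lemma adjm_quad: "vec n f \<bullet> (adj_matrix n Adj *\<^sub>v vec n f) = Q f"
proof -
  have "vec n f \<bullet> (adj_matrix n Adj *\<^sub>v vec n f) = (\<Sum>i<n. f i * (adj_matrix n Adj *\<^sub>v vec n f) $ i)"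
    by (simp add: scalar_prod_def lessThan_atLeast0 adj_matrix_def)
  also have "\<dots> = (\<Sum>i<n. f i * (\<Sum>j<n. a i j * f j))" by (rule sum.cong) (auto simp: adjm_mult)
  also have "\<dots> = Q f" unfolding Q_def by (simp add: sum_distrib_left mult.commute mult.left_commute)
  finally show ?thesis .
qed

lemma rayleigh_adj:
  assumes n: "n \<ge> 2" and f0: "(\<Sum>i<n. f i) = 0"
  shows "Q f \<le> expansion n Adj * (\<Sum>i<n. (f i)^2) \<and> - (expansion n Adj * (\<Sum>i<n. (f i)^2)) \<le> Q f"
proof -
  define A where "A = adj_matrix n Adj"
  define ev where "ev = rev (sorted_list_of_multiset (proots (char_poly A)))"
  have one: "A *\<^sub>v vec n (\<lambda>_. 1) = real d \<cdot>\<^sub>v vec n (\<lambda>_. 1)"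
  proof (rule eq_vecI)
    fix i assume "i < dim_vec (real d \<cdot>\<^sub>v vec n (\<lambda>_. 1::real))"
    hence i: "i < n" by simp
    have "(A *\<^sub>v vec n (\<lambda>_. 1)) $ i = real d" unfolding A_def using adjm_mult[OF i, of "\<lambda>_. 1"] row_sum[OF i] by simp
    thus "(A *\<^sub>v vec n (\<lambda>_. 1)) $ i = (real d \<cdot>\<^sub>v vec n (\<lambda>_. 1)) $ i" using i by simp
  qed (use adjm_carrier in \<open>auto simp: A_def\<close>)
  have quad: "z \<bullet> (A *\<^sub>v z) \<le> real d * (z \<bullet> z)" if z: "z \<in> carrier_vec n" for z
  proof -
    have zv: "z = vec n (\<lambda>i. z $ i)" using z by auto
    have "z \<bullet> (A *\<^sub>v z) = Q (\<lambda>i. z $ i)" unfolding A_def by (subst (1 2) zv, rule adjm_quad)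
    also have "\<dots> \<le> real d * (\<Sum>i<n. (z $ i)^2)" unfolding Q_def by (rule quad_le)
    also have "(\<Sum>i<n. (z $ i)^2) = z \<bullet> z" using vec_sq[OF z] by simp
    finally show ?thesis .
  qed
  have xo: "vec n f \<bullet> vec n (\<lambda>_. 1) = 0" using f0 by (simp add: scalar_prod_def lessThan_atLeast0)
  from rayleigh[OF _ _ n one quad _ xo ev_def[unfolded A_def[symmetric]]] adjm_carrier adjm_sym
  have r: "Q f \<le> ev ! 1 * (\<Sum>i<n. (f i)^2) \<and> last ev * (\<Sum>i<n. (f i)^2) \<le> Q f"
    unfolding A_def adjm_quad using vec_sq[of "vec n f" n] by (simp add: A_def)
  have lam: "expansion n Adj = max (ev ! 1) \<bar>last ev\<bar>"
    unfolding expansion_def adj_eigenvalues_def ev_def A_def Let_def ..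
  have sq: "(\<Sum>i<n. (f i)^2) \<ge> 0" by (simp add: sum_nonneg)
  have "ev ! 1 * (\<Sum>i<n. (f i)^2) \<le> expansion n Adj * (\<Sum>i<n. (f i)^2)"
    unfolding lam using sq by (intro mult_right_mono) auto
  moreover have "- (expansion n Adj * (\<Sum>i<n. (f i)^2)) \<le> last ev * (\<Sum>i<n. (f i)^2)"
  proof -
    have "- expansion n Adj \<le> last ev" unfolding lam by linarith
    hence "- expansion n Adj * (\<Sum>i<n. (f i)^2) \<le> last ev * (\<Sum>i<n. (f i)^2)"
      using sq by (intro mult_right_mono) auto
    thus ?thesis by simp
  qed
  ultimately show ?thesis using r by linarith
qed

lemma expansion_nonneg: "expansion n Adj \<ge> 0"
  unfolding expansion_def Let_def by simp

lemma Bf_swap: "Bf g f = Bf f g"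
proof -
  have "Bf g f = (\<Sum>j<n. \<Sum>i<n. a i j * g i * f j)" unfolding Bf_def by (rule sum.swap)
  also have "\<dots> = Bf f g" unfolding Bf_def by (intro sum.cong refl) (simp add: a_sym mult.commute mult.left_commute)
  finally show ?thesis .
qed

lemma bilin:
  assumes n: "n \<ge> 2" and f0: "(\<Sum>i<n. f i) = 0" and g0: "(\<Sum>i<n. g i) = 0" and s: "s > 0"
  shows "Bf f g \<le> expansion n Adj / 2 * (s * (\<Sum>i<n. (f i)^2) + (\<Sum>i<n. (g i)^2) / s)"
proof -
  define t where "t = sqrt s"
  have t: "t > 0" "t * t = s" unfolding t_def using s by auto
  define F where "F = (\<lambda>i. t * f i + g i / t)"
  define G where "G = (\<lambda>i. t * f i - g i / t)"
  have F0: "(\<Sum>i<n. F i) = 0" unfolding F_def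
    by (simp add: sum.distrib sum_distrib_left[symmetric] sum_divide_distrib[symmetric] f0 g0)
  have G0: "(\<Sum>i<n. G i) = 0" unfolding G_def
    by (simp add: sum_subtractf sum_distrib_left[symmetric] sum_divide_distrib[symmetric] f0 g0)
  have QFG: "Q F - Q G = 2 * Bf f g + 2 * Bf g f"
  proof -
    have "Q F - Q G = (\<Sum>i<n. \<Sum>j<n. 2 * (a i j * f i * g j) + 2 * (a i j * g i * f j))"
      unfolding Q_def sum_subtractf[symmetric]
    proof (intro sum.cong refl)
      fix i j
      have e: "F i * F j - G i * G j = 2 * f i * g j + 2 * g i * f j"
        unfolding F_def G_def using t(1) by (simp add: field_simps)
      have "a i j * F i * F j - a i j * G i * G j = a i j * (F i * F j - G i * G j)"
        by (simp add: algebra_simps)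
      also have "\<dots> = a i j * (2 * f i * g j + 2 * g i * f j)" unfolding e ..
      also have "\<dots> = 2 * (a i j * f i * g j) + 2 * (a i j * g i * f j)" by (simp add: algebra_simps)
      finally show "a i j * F i * F j - a i j * G i * G j = 2 * (a i j * f i * g j) + 2 * (a i j * g i * f j)" .
    qed
    also have "\<dots> = 2 * Bf f g + 2 * Bf g f"
      unfolding Bf_def by (simp add: sum.distrib sum_distrib_left)
    finally show ?thesis .
  qed
  have SS: "(\<Sum>i<n. (F i)^2) + (\<Sum>i<n. (G i)^2) = 2 * (s * (\<Sum>i<n. (f i)^2) + (\<Sum>i<n. (g i)^2) / s)"
  proof -
    have "(\<Sum>i<n. (F i)^2) + (\<Sum>i<n. (G i)^2) = (\<Sum>i<n. 2 * s * (f i)^2 + 2 * ((g i)^2 / s))"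
      unfolding sum.distrib[symmetric]
    proof (intro sum.cong refl)
      fix i
      show "(F i)^2 + (G i)^2 = 2 * s * (f i)^2 + 2 * ((g i)^2 / s)"
        unfolding t(2)[symmetric] F_def G_def using t(1) by (simp add: field_simps power2_eq_square)
    qed
    also have "\<dots> = 2 * (s * (\<Sum>i<n. (f i)^2) + (\<Sum>i<n. (g i)^2) / s)"
      by (simp add: sum.distrib sum_distrib_left sum_divide_distrib algebra_simps)
    finally show ?thesis .
  qed
  have "Q F \<le> expansion n Adj * (\<Sum>i<n. (F i)^2)" using rayleigh_adj[OF n F0] by simp
  moreover have "- (expansion n Adj * (\<Sum>i<n. (G i)^2)) \<le> Q G" using rayleigh_adj[OF n G0] by simp
  ultimately have "4 * Bf f g \<le> expansion n Adj * ((\<Sum>i<n. (F i)^2) + (\<Sum>i<n. (G i)^2))"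
    using QFG Bf_swap[of f g] by (simp add: algebra_simps)
  also have "\<dots> = 2 * (expansion n Adj * (s * (\<Sum>i<n. (f i)^2) + (\<Sum>i<n. (g i)^2) / s))"
    unfolding SS by simp
  finally show ?thesis by simp
qed

lemma ind_sum:
  assumes "S \<subseteq> {..<n}"
  shows "(\<Sum>i<n. (if i \<in> S then h i else 0)) = (\<Sum>i\<in>S. h i)"
proof -
  have "(\<Sum>i<n. (if i \<in> S then h i else 0)) = sum h ({..<n} \<inter> S)"
    by (simp add: sum.inter_restrict)
  also have "{..<n} \<inter> S = S" using assms by auto
  finally show ?thesis .
qed

lemma B1_card:
  assumes S: "S \<subseteq> {..<n}" and T: "T \<subseteq> {..<n}"
  shows "Bf (\<lambda>i. if i \<in> S then 1 else 0) (\<lambda>i. if i \<in> T then 1 else 0)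
       = real (card {(u,w). u \<in> S \<and> w \<in> T \<and> Adj u w})"
proof -
  have finS: "finite S" using S finite_subset by blast
  have finT: "finite T" using T finite_subset by blast
  have "Bf (\<lambda>i. if i \<in> S then 1 else 0) (\<lambda>i. if i \<in> T then 1 else 0)
      = (\<Sum>i<n. if i \<in> S then (\<Sum>j<n. if j \<in> T then a i j else 0) else 0)"
    unfolding Bf_def by (intro sum.cong refl) (auto intro!: sum.cong)
  also have "\<dots> = (\<Sum>i<n. if i \<in> S then (\<Sum>j\<in>T. a i j) else 0)" by (simp only: ind_sum[OF T])
  also have "\<dots> = (\<Sum>i\<in>S. (\<Sum>j\<in>T. a i j))" by (rule ind_sum[OF S])
  also have "\<dots> = (\<Sum>i\<in>S. real (card {j \<in> T. Adj i j}))"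
  proof (intro sum.cong refl)
    fix i
    have "(\<Sum>j\<in>T. a i j) = sum (\<lambda>_. 1) (T \<inter> {j. Adj i j})"
      unfolding a_def by (simp add: sum.If_cases finT)
    also have "T \<inter> {j. Adj i j} = {j \<in> T. Adj i j}" by auto
    finally show "(\<Sum>j\<in>T. a i j) = real (card {j \<in> T. Adj i j})" by simp
  qed
  also have "\<dots> = real (card (SIGMA i:S. {j \<in> T. Adj i j}))"
    using finS finT by (simp add: card_SigmaI)
  also have "(SIGMA i:S. {j \<in> T. Adj i j}) = {(u,w). u \<in> S \<and> w \<in> T \<and> Adj u w}" by auto
  finally show ?thesis .
qed

lemma mixing:
  assumes n: "n \<ge> 2" and S: "S \<subseteq> {..<n}" and T: "T \<subseteq> {..<n}" and Sne: "S \<noteq> {}" and Tne: "T \<noteq> {}"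
  shows "real (card {(u,w). u \<in> S \<and> w \<in> T \<and> Adj u w})
     \<le> real d * real (card S) * real (card T) / real n + expansion n Adj * sqrt (real (card S) * real (card T))"
proof -
  have finS: "finite S" using S finite_subset by blast
  have finT: "finite T" using T finite_subset by blast
  define cS where "cS = real (card S)"
  define cT where "cT = real (card T)"
  have cSp: "cS > 0" unfolding cS_def using finS Sne by (simp add: card_gt_0_iff)
  have cTp: "cT > 0" unfolding cT_def using finT Tne by (simp add: card_gt_0_iff)
  have np: "real n > 0" using n by simp
  define sS where "sS = (\<lambda>i. if i \<in> S then 1 else (0::real))"
  define tT where "tT = (\<lambda>i. if i \<in> T then 1 else (0::real))"
  define \<alpha> where "\<alpha> = cS / real n"
  define \<beta> where "\<beta> = cT / real n"
  define f where "f = (\<lambda>i. sS i - \<alpha>)"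
  define g where "g = (\<lambda>i. tT i - \<beta>)"
  have sumS: "(\<Sum>i<n. sS i) = cS" unfolding sS_def cS_def using ind_sum[OF S, of "\<lambda>_. 1::real"] by simp
  have sumT: "(\<Sum>i<n. tT i) = cT" unfolding tT_def cT_def using ind_sum[OF T, of "\<lambda>_. 1::real"] by simp
  have f0: "(\<Sum>i<n. f i) = 0" unfolding f_def \<alpha>_def using sumS np by (simp add: sum_subtractf)
  have g0: "(\<Sum>i<n. g i) = 0" unfolding g_def \<beta>_def using sumT np by (simp add: sum_subtractf)
  have ff: "(\<Sum>i<n. (f i)^2) \<le> cS"
  proof -
    have "(\<Sum>i<n. (f i)^2) = (\<Sum>i<n. sS i * (1 - 2 * \<alpha>) + \<alpha>^2)"
      by (intro sum.cong refl) (auto simp: f_def sS_def power2_eq_square algebra_simps)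
    also have "\<dots> = cS * (1 - 2 * \<alpha>) + real n * \<alpha>^2"
      by (simp add: sum.distrib sum_distrib_right[symmetric] sumS)
    also have "\<dots> = cS - cS * cS / real n" unfolding \<alpha>_def using np by (simp add: field_simps power2_eq_square)
    also have "\<dots> \<le> cS" using cSp np by simp
    finally show ?thesis .
  qed
  have gg: "(\<Sum>i<n. (g i)^2) \<le> cT"
  proof -
    have "(\<Sum>i<n. (g i)^2) = (\<Sum>i<n. tT i * (1 - 2 * \<beta>) + \<beta>^2)"
      by (intro sum.cong refl) (auto simp: g_def tT_def power2_eq_square algebra_simps)
    also have "\<dots> = cT * (1 - 2 * \<beta>) + real n * \<beta>^2"
      by (simp add: sum.distrib sum_distrib_right[symmetric] sumT)
    also have "\<dots> = cT - cT * cT / real n" unfolding \<beta>_def using np by (simp add: field_simps power2_eq_square)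
    also have "\<dots> \<le> cT" using cTp np by simp
    finally show ?thesis .
  qed
  have fg: "Bf f g = Bf sS tT - real d * cS * cT / real n"
  proof -
    have "Bf f g = (\<Sum>i<n. \<Sum>j<n. a i j * sS i * tT j - \<beta> * (a i j * sS i) - \<alpha> * (a i j * tT j) + \<alpha> * \<beta> * a i j)"
      unfolding Bf_def f_def g_def by (intro sum.cong refl) (simp add: algebra_simps)
    also have "\<dots> = Bf sS tT - \<beta> * (\<Sum>i<n. \<Sum>j<n. a i j * sS i) - \<alpha> * (\<Sum>i<n. \<Sum>j<n. a i j * tT j)
        + \<alpha> * \<beta> * (\<Sum>i<n. \<Sum>j<n. a i j)"
      unfolding Bf_def by (simp add: sum.distrib sum_subtractf sum_distrib_left)
    also have "(\<Sum>i<n. \<Sum>j<n. a i j * sS i) = real d * cS"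
    proof -
      have "(\<Sum>i<n. \<Sum>j<n. a i j * sS i) = (\<Sum>i<n. sS i * real d)"
      proof (intro sum.cong refl)
        fix i assume "i \<in> {..<n}"
        hence i: "i < n" by simp
        have "(\<Sum>j<n. a i j * sS i) = sS i * (\<Sum>j<n. a i j)" by (simp add: sum_distrib_left mult.commute)
        thus "(\<Sum>j<n. a i j * sS i) = sS i * real d" using row_sum[OF i] by simp
      qed
      thus ?thesis using sumS by (simp add: sum_distrib_left[symmetric] mult.commute)
    qed
    also have "(\<Sum>i<n. \<Sum>j<n. a i j * tT j) = real d * cT"
    proof -
      have "(\<Sum>i<n. \<Sum>j<n. a i j * tT j) = (\<Sum>j<n. \<Sum>i<n. a i j * tT j)" by (rule sum.swap)
      also have "\<dots> = (\<Sum>j<n. tT j * real d)"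
      proof (intro sum.cong refl)
        fix j assume "j \<in> {..<n}"
        hence j: "j < n" by simp
        have "(\<Sum>i<n. a i j * tT j) = tT j * (\<Sum>i<n. a i j)" by (simp add: sum_distrib_left mult.commute)
        thus "(\<Sum>i<n. a i j * tT j) = tT j * real d" using col_sum[OF j] by simp
      qed
      finally show ?thesis using sumT by (simp add: sum_distrib_left[symmetric] mult.commute)
    qed
    also have "(\<Sum>i<n. \<Sum>j<n. a i j) = real n * real d" by (simp add: row_sum)
    finally have E: "Bf f g = Bf sS tT - \<beta> * (real d * cS) - \<alpha> * (real d * cT) + \<alpha> * \<beta> * (real n * real d)" .
    have e1: "\<beta> * (real d * cS) = real d * cS * cT / real n" unfolding \<beta>_def by simp
    have e2: "\<alpha> * (real d * cT) = real d * cS * cT / real n" unfolding \<alpha>_def by simp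
    have e3: "\<alpha> * \<beta> * (real n * real d) = real d * cS * cT / real n"
      unfolding \<alpha>_def \<beta>_def using np by (simp add: field_simps power2_eq_square)
    show ?thesis using E e1 e2 e3 by linarith
  qed
  define s where "s = sqrt cT / sqrt cS"
  have sp: "s > 0" unfolding s_def using cSp cTp by simp
  have lam0: "expansion n Adj \<ge> 0" by (rule expansion_nonneg)
  have "Bf f g \<le> expansion n Adj / 2 * (s * (\<Sum>i<n. (f i)^2) + (\<Sum>i<n. (g i)^2) / s)"
    by (rule bilin[OF n f0 g0 sp])
  also have "\<dots> \<le> expansion n Adj / 2 * (s * cS + cT / s)"
    using lam0 ff gg sp by (intro mult_left_mono add_mono mult_left_mono divide_right_mono) auto
  also have "s * cS + cT / s = 2 * sqrt (cS * cT)"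
  proof -
    have "s * cS = sqrt cT * sqrt cS" unfolding s_def using cSp
      by (simp add: field_simps)
    moreover have "cT / s = sqrt cT * sqrt cS" unfolding s_def using cSp cTp
      by (simp add: field_simps)
    ultimately show ?thesis by (simp add: real_sqrt_mult)
  qed
  finally have "Bf f g \<le> expansion n Adj * sqrt (cS * cT)" by simp
  hence "Bf sS tT \<le> real d * cS * cT / real n + expansion n Adj * sqrt (cS * cT)" using fg by simp
  thus ?thesis using B1_card[OF S T] unfolding sS_def tT_def cS_def cT_def by simp
qed

end

lemma fhe_sub: "(fhe_step G rv thr)\<^sup>*\<^sup>* E1 E2 \<Longrightarrow> E2 \<subseteq> E1"
proof (induction rule: rtranclp_induct)
  case (step y z)
  thus ?case unfolding fhe_step_def by blast
qed simp

lemma heavy: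
  assumes "find_heavy_edges_output G rv thr E B E'" and "e \<in> E'" and "x \<in> endpoints e"
  shows "real (card (class_at G rv E' x e)) > thr"
proof (rule ccontr)
  assume "\<not> ?thesis"
  hence "fhe_step G rv thr E' (E' - class_at G rv E' x e)" unfolding fhe_step_def using assms(2,3)
    by (intro bexI[of _ e] bexI[of _ x]) auto
  thus False using assms(1) unfolding find_heavy_edges_output_def by blast
qed

lemma loc_equiv_sym: "loc_equiv G rv x e e' \<Longrightarrow> loc_equiv G rv x e' e"
  unfolding loc_equiv_def by auto

lemma glob_step_sym: "sym (glob_step G rv E')"
  unfolding glob_step_def sym_def using loc_equiv_sym by blast

lemma glob_equiv_equiv: "equiv E' (glob_equiv G rv E')"
proof (rule equivI)
  have "glob_step G rv E' \<subseteq> E' \<times> E'" unfolding glob_step_def by auto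
  hence "(glob_step G rv E')\<^sup>+ \<subseteq> E' \<times> E'" by (rule trancl_subset_Sigma)
  thus "glob_equiv G rv E' \<subseteq> E' \<times> E'" unfolding glob_equiv_def by auto
  show "refl_on E' (glob_equiv G rv E')" unfolding glob_equiv_def refl_on_def by auto
  show "sym (glob_equiv G rv E')" unfolding glob_equiv_def
    using sym_trancl[OF glob_step_sym] by (auto simp: sym_def)
  show "trans (glob_equiv G rv E')" unfolding glob_equiv_def trans_def
    by (auto intro: trancl_trans)
qed

lemma class_sub_glob:
  assumes "e \<in> E'"
  shows "class_at G rv E' x e \<subseteq> glob_equiv G rv E' `` {e}"
proof
  fix e' assume "e' \<in> class_at G rv E' x e"
  hence "e' \<in> E'" "loc_equiv G rv x e e'" unfolding class_at_def by auto
  hence "(e, e') \<in> glob_step G rv E'" unfolding glob_step_def using assms by blast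
  thus "e' \<in> glob_equiv G rv E' `` {e}" unfolding glob_equiv_def by auto
qed

lemma class_at_fst: "e' \<in> class_at G rv E' (u, False) e \<Longrightarrow> fst e' = u"
  unfolding class_at_def loc_equiv_def endpoints_def by auto

lemma class_at_snd: "e' \<in> class_at G rv E' (w, True) e \<Longrightarrow> snd e' = w"
  unfolding class_at_def loc_equiv_def endpoints_def by auto

lemma card_by_proj:
  fixes Cl :: "dedge set" and p :: "dedge \<Rightarrow> nat"
  assumes fin: "finite Cl" and ne: "Cl \<noteq> {}"
    and big: "\<And>u. u \<in> p ` Cl \<Longrightarrow> real (card {e' \<in> Cl. p e' = u}) > thr"
  shows "real (card Cl) > thr * real (card (p ` Cl))"
proof -
  have U: "Cl = (\<Union>u\<in>p ` Cl. {e' \<in> Cl. p e' = u})" by auto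
  have "card (\<Union>u\<in>p ` Cl. {e' \<in> Cl. p e' = u}) = (\<Sum>u\<in>p ` Cl. card {e' \<in> Cl. p e' = u})"
    by (rule card_UN_disjoint) (use fin in auto)
  hence "card Cl = (\<Sum>u\<in>p ` Cl. card {e' \<in> Cl. p e' = u})" using U by simp
  hence "real (card Cl) = (\<Sum>u\<in>p ` Cl. real (card {e' \<in> Cl. p e' = u}))" by simp
  also have "\<dots> > (\<Sum>u\<in>p ` Cl. thr)"
    using fin ne big by (intro sum_strict_mono) auto
  finally show ?thesis by (simp add: mult.commute)
qed

lemma final_arith:
  fixes N a b thr lam c d n :: real
  assumes Na: "N > thr * a" and Nb: "N > thr * b" and a: "a \<ge> 1" and b: "b \<ge> 1"
    and mix: "N \<le> d * a * b / n + lam * sqrt (a * b)"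
    and lam: "lam \<le> c * d" and thr: "thr = 2 * c * d" and c: "c \<ge> 0" and d: "d > 0" and n: "n > 0"
  shows "N \<ge> 2 * c^2 * d * n"
proof (cases "c = 0")
  case True
  thus ?thesis using Na thr a by simp
next
  case False
  hence cp: "c > 0" using c by simp
  define g where "g = sqrt (a * b)"
  have gp: "g > 0" unfolding g_def using a b by simp
  have gg: "g * g = a * b" unfolding g_def using a b by simp
  have thrp: "thr > 0" using thr cp d by simp
  have ta: "thr * a > 0" using thrp a by simp
  have tb: "thr * b > 0" using thrp b by simp
  have N0: "N \<ge> 0" using Na ta by simp
  have "thr * a * (thr * b) < N * N"
    using Na Nb ta tb by (intro mult_strict_mono) auto
  moreover have "(thr * g) * (thr * g) = thr * a * (thr * b)"
    by (metis gg mult.commute mult.left_commute)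
  ultimately have NN: "(thr * g) * (thr * g) < N * N" by linarith
  have Ng: "N > thr * g"
  proof (rule ccontr)
    assume "\<not> N > thr * g"
    hence "N \<le> thr * g" by simp
    hence "N * N \<le> (thr * g) * (thr * g)" using N0 by (intro mult_mono) auto
    thus False using NN by simp
  qed
  have "thr * g < d * (g * g) / n + c * d * g"
  proof -
    have "lam * g \<le> c * d * g" using lam gp by (intro mult_right_mono) auto
    thus ?thesis using Ng mix gg unfolding g_def[symmetric] by (simp add: algebra_simps)
  qed
  hence "2 * c * d * g < d * g * g / n + c * d * g" using thr by (simp add: algebra_simps)
  hence "c * d * g < d * g * g / n" by simp
  hence "c * d * g * n < d * g * g" using n by (simp add: field_simps)
  hence "c * n * (d * g) < g * (d * g)" by (simp add: algebra_simps)
  hence gc: "c * n < g" using d gp by (simp add: mult_less_cancel_right)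
  have "2 * c^2 * d * n = (2 * c * d) * (c * n)" by (simp add: power2_eq_square algebra_simps)
  also have "\<dots> \<le> (2 * c * d) * g" using gc cp d by (intro mult_left_mono) auto
  also have "\<dots> < N" using Ng thr by simp
  finally show ?thesis by simp
qed

lemma rel_dist_pos:
  assumes code: "linear_code d C0" and nz: "\<exists>c\<in>C0. c \<noteq> zero_word"
  shows "rel_dist d C0 > 0"
proof -
  define V where "V = {real (card (supp d c)) / real d | c. c \<in> C0 \<and> c \<noteq> zero_word}"
  have "V \<subseteq> (\<lambda>k. real k / real d) ` {..d}"
  proof
    fix v assume "v \<in> V"
    then obtain c where v: "v = real (card (supp d c)) / real d" unfolding V_def by auto
    have "supp d c \<subseteq> {..<d}" unfolding supp_def by auto
    hence "card (supp d c) \<le> d" by (metis card_lessThan card_mono finite_lessThan)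
    thus "v \<in> (\<lambda>k. real k / real d) ` {..d}" using v by auto
  qed
  hence fin: "finite V" by (rule finite_subset) simp
  have ne: "V \<noteq> {}" using nz unfolding V_def by auto
  have "Min V \<in> V" using Min_in[OF fin ne] .
  then obtain c where c: "c \<in> C0" "c \<noteq> zero_word" and mv: "Min V = real (card (supp d c)) / real d"
    unfolding V_def by auto
  have cw: "c \<in> words d" using code c unfolding f2_subspace_def by auto
  obtain i where i: "c i" using c(2) unfolding zero_word_def by auto
  have id: "i < d" using cw i unfolding words_def by (metis mem_Collect_eq not_le)
  have "i \<in> supp d c" using i id unfolding supp_def by auto
  moreover have "finite (supp d c)" unfolding supp_def by simp
  ultimately have "card (supp d c) > 0" by (auto simp: card_gt_0_iff)
  hence "Min V > 0" using mv id by simp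
  thus ?thesis unfolding rel_dist_def V_def by simp
qed

theorem lemma3p5:
  fixes r d n :: nat and C0 :: "(nat \<Rightarrow> bool) set" and \<delta> \<delta>r lam \<epsilon> :: real
    and Adj :: "nat \<Rightarrow> nat \<Rightarrow> bool" and z :: "dedge \<Rightarrow> bool option"
    and \<Gamma> :: "dvertex \<Rightarrow> nat \<Rightarrow> nat"
    and G :: "dvertex \<Rightarrow> dedge \<Rightarrow> nat \<Rightarrow> bool" and b :: "dvertex \<Rightarrow> nat \<Rightarrow> bool"
    and rv :: "dvertex \<Rightarrow> nat" and E' :: "dedge set"
  assumes r: "r \<ge> 1"
    and code: "linear_code d C0"
    and nonzero: "\<exists>c\<in>C0. c \<noteq> zero_word"
    and has_r_sub: "\<exists>V. V \<subseteq> C0 \<and> f2_dim_eq d V r"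
    and delta: "\<delta> = rel_dist d C0"
    and delta_r: "\<delta>r = rel_gen_dist r d C0"
    and graph: "regular_graph n d Adj"
    and lam: "lam = expansion n Adj"
    and eps: "\<epsilon> > 0"
    and lam_bound: "lam / real d \<le> \<epsilon>^2 * \<delta>^2 / 2^(r+4)"
    and bots: "real (card {e \<in> dc_edges Adj. z e = None}) \<le> (1 - \<epsilon>) * \<delta> * \<delta>r * real d * real n"
    and order: "\<And>x. x \<in> dc_vertices n \<Longrightarrow> bij_betw (\<Gamma> x) {0..<d} {w. Adj (fst x) w}"
    and param: "\<And>x. x \<in> dc_vertices n - bad_set n Adj \<delta>r d z \<Longrightarrow>
        b x \<in> words d \<and>
        List_code d C0 (local_word \<Gamma> z x) =
          aff_map d (rv x) (\<lambda>i. inc_edge x (\<Gamma> x i)) (G x) (b x) ` words (rv x) \<and>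
        card (List_code d C0 (local_word \<Gamma> z x)) = 2 ^ rv x"
    and fhe: "find_heavy_edges_output G rv (\<epsilon>^2 * \<delta>^2 / 2^(r+3) * real d)
               (dc_edges Adj) (bad_set n Adj \<delta>r d z) E'"
  shows "(\<forall>e\<in>E'. real (card (glob_equiv G rv E' `` {e}))
              \<ge> \<epsilon>^4 * \<delta>^4 / 2^(2*r+7) * real d * real n)
         \<and> real (card (E' // glob_equiv G rv E')) \<le> 2^(2*r+7) / (\<epsilon>^4 * \<delta>^4)"
proof -
  define thr where "thr = \<epsilon>^2 * \<delta>^2 / 2^(r+3) * real d"
  define c where "c = \<epsilon>^2 * \<delta>^2 / 2^(r+4)"
  define R where "R = glob_equiv G rv E'"
  have p2: "(2::real)^(r+4) = 2 * 2^(r+3)" by (simp add: power_add)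
  have thr_eq: "thr = 2 * c * real d" unfolding thr_def c_def p2 by (simp add: field_simps)
  have c0: "c \<ge> 0" unfolding c_def by simp
  have target: "\<epsilon>^4 * \<delta>^4 / 2^(2*r+7) * real d * real n = 2 * c^2 * real d * real n"
  proof -
    have h1: "(2::real)^(2*r+7) = 2^r * 2^r * 128"
    proof -
      have e: "2*r+7 = r + r + 7" by simp
      show ?thesis unfolding e power_add by simp
    qed
    have h2: "(2::real)^(r+4) = 2^r * 16" by (simp add: power_add)
    show ?thesis unfolding c_def h1 h2 by (simp add: field_simps power4_eq_xxxx power2_eq_square)
  qed
  have EQ: "equiv E' R" unfolding R_def by (rule glob_equiv_equiv)
  have adjb: "\<And>u v. Adj u v \<Longrightarrow> u < n \<and> v < n" using graph unfolding regular_graph_def by blast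
  have irr: "\<And>u. \<not> Adj u u" using graph unfolding regular_graph_def by blast
  have degd: "\<And>u. u < n \<Longrightarrow> card {v. Adj u v} = d" using graph unfolding regular_graph_def by blast
  have E'sub: "E' \<subseteq> dc_edges Adj"
    using fhe_sub[of G rv "\<epsilon>^2 * \<delta>^2 / 2^(r+3) * real d"] fhe
    unfolding find_heavy_edges_output_def by blast
  have dcsub: "dc_edges Adj \<subseteq> {..<n} \<times> {..<n}" unfolding dc_edges_def using adjb by auto
  have findc: "finite (dc_edges Adj)" using dcsub finite_subset by blast
  have finE': "finite E'" using E'sub findc finite_subset by blast
  have hv: "\<And>e x. e \<in> E' \<Longrightarrow> x \<in> endpoints e \<Longrightarrow> real (card (class_at G rv E' x e)) > thr"
    unfolding thr_def using heavy[OF fhe] by blast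
  have edge_facts: "n \<ge> 2 \<and> d > 0" if e: "e \<in> E'" for e
  proof -
    have adj: "Adj (fst e) (snd e)" using e E'sub unfolding dc_edges_def by auto
    have "fst e < n" "snd e < n" using adjb[OF adj] by auto
    moreover have "fst e \<noteq> snd e" using adj irr by metis
    ultimately have n2: "n \<ge> 2" by linarith
    have "{v. Adj (fst e) v} \<subseteq> {..<n}" using adjb by auto
    hence "finite {v. Adj (fst e) v}" using finite_subset by blast
    moreover have "snd e \<in> {v. Adj (fst e) v}" using adj by simp
    ultimately have "card {v. Adj (fst e) v} > 0" by (auto simp: card_gt_0_iff)
    thus ?thesis using degd[OF \<open>fst e < n\<close>] n2 by simp
  qed
  have main: "real (card (R `` {e})) \<ge> 2 * c^2 * real d * real n" if e: "e \<in> E'" for e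
  proof -
    define Cl where "Cl = R `` {e}"
    have n2: "n \<ge> 2" and dp: "d > 0" using edge_facts[OF e] by auto
    have ClE: "Cl \<subseteq> E'" unfolding Cl_def using EQ unfolding equiv_def by auto
    have finCl: "finite Cl" using ClE finE' finite_subset by blast
    have eCl: "e \<in> Cl" unfolding Cl_def using EQ e unfolding equiv_def refl_on_def by auto
    have Clne: "Cl \<noteq> {}" using eCl by auto
    have trR: "trans R" using EQ unfolding equiv_def by auto
    have into: "class_at G rv E' x e1 \<subseteq> Cl" if e1: "e1 \<in> Cl" for x e1
    proof
      fix e' assume "e' \<in> class_at G rv E' x e1"
      moreover have "e1 \<in> E'" using e1 ClE by auto
      ultimately have "(e1, e') \<in> R" using class_sub_glob unfolding R_def by blast
      moreover have "(e, e1) \<in> R" using e1 unfolding Cl_def by auto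
      ultimately have "(e, e') \<in> R" using trR unfolding trans_def by blast
      thus "e' \<in> Cl" unfolding Cl_def by auto
    qed
    have bigL: "real (card {e' \<in> Cl. fst e' = u}) > thr" if u: "u \<in> fst ` Cl" for u
    proof -
      obtain e1 where e1: "e1 \<in> Cl" "fst e1 = u" using u by auto
      have e1E: "e1 \<in> E'" using e1 ClE by auto
      have x: "(u, False) \<in> endpoints e1" unfolding endpoints_def using e1 by auto
      have "class_at G rv E' (u, False) e1 \<subseteq> {e' \<in> Cl. fst e' = u}"
        using into[OF e1(1)] class_at_fst by blast
      hence "card (class_at G rv E' (u, False) e1) \<le> card {e' \<in> Cl. fst e' = u}"
        using finCl by (intro card_mono) auto
      thus ?thesis using hv[OF e1E x] by linarith
    qed
    have bigR: "real (card {e' \<in> Cl. snd e' = w}) > thr" if w: "w \<in> snd ` Cl" for w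
    proof -
      obtain e1 where e1: "e1 \<in> Cl" "snd e1 = w" using w by auto
      have e1E: "e1 \<in> E'" using e1 ClE by auto
      have x: "(w, True) \<in> endpoints e1" unfolding endpoints_def using e1 by auto
      have "class_at G rv E' (w, True) e1 \<subseteq> {e' \<in> Cl. snd e' = w}"
        using into[OF e1(1)] class_at_snd by blast
      hence "card (class_at G rv E' (w, True) e1) \<le> card {e' \<in> Cl. snd e' = w}"
        using finCl by (intro card_mono) auto
      thus ?thesis using hv[OF e1E x] by linarith
    qed
    have Na: "real (card Cl) > thr * real (card (fst ` Cl))"
      by (rule card_by_proj[OF finCl Clne]) (use bigL in auto)
    have Nb: "real (card Cl) > thr * real (card (snd ` Cl))"
      by (rule card_by_proj[OF finCl Clne]) (use bigR in auto)
    have "card (fst ` Cl) > 0" using finCl Clne by (simp add: card_gt_0_iff)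
    hence a1: "real (card (fst ` Cl)) \<ge> 1" by linarith
    have "card (snd ` Cl) > 0" using finCl Clne by (simp add: card_gt_0_iff)
    hence b1: "real (card (snd ` Cl)) \<ge> 1" by linarith
    have Cln: "Cl \<subseteq> {..<n} \<times> {..<n}" using ClE E'sub dcsub by blast
    have SL: "fst ` Cl \<subseteq> {..<n}" using Cln by force
    have SR: "snd ` Cl \<subseteq> {..<n}" using Cln by force
    have Clsub: "Cl \<subseteq> {(u,w). u \<in> fst ` Cl \<and> w \<in> snd ` Cl \<and> Adj u w}"
      using ClE E'sub unfolding dc_edges_def by force
    have finP: "finite {(u,w). u \<in> fst ` Cl \<and> w \<in> snd ` Cl \<and> Adj u w}"
      by (rule finite_subset[of _ "fst ` Cl \<times> snd ` Cl"]) (use finCl in auto)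
    have "real (card Cl) \<le> real (card {(u,w). u \<in> fst ` Cl \<and> w \<in> snd ` Cl \<and> Adj u w})"
      using card_mono[OF finP Clsub] by simp
    also have "\<dots> \<le> real d * real (card (fst ` Cl)) * real (card (snd ` Cl)) / real n
        + expansion n Adj * sqrt (real (card (fst ` Cl)) * real (card (snd ` Cl)))"
      by (rule mixing[OF graph n2 SL SR]) (use Clne in auto)
    finally have mix: "real (card Cl) \<le> real d * real (card (fst ` Cl)) * real (card (snd ` Cl)) / real n
        + lam * sqrt (real (card (fst ` Cl)) * real (card (snd ` Cl)))" using lam by simp
    have lamc: "lam \<le> c * real d" using lam_bound dp unfolding c_def by (simp add: field_simps)
    have "real (card Cl) \<ge> 2 * c^2 * real d * real n"
      by (rule final_arith[OF Na Nb a1 b1 mix lamc thr_eq c0]) (use dp n2 in auto)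
    thus ?thesis unfolding Cl_def .
  qed
  have part1: "\<forall>e\<in>E'. real (card (glob_equiv G rv E' `` {e})) \<ge> \<epsilon>^4 * \<delta>^4 / 2^(2*r+7) * real d * real n"
    using main unfolding target R_def by blast
  have part2: "real (card (E' // glob_equiv G rv E')) \<le> 2^(2*r+7) / (\<epsilon>^4 * \<delta>^4)"
  proof (cases "E' = {}")
    case True
    thus ?thesis by simp
  next
    case False
    then obtain e0 where e0: "e0 \<in> E'" by auto
    have n2: "n \<ge> 2" and dp: "d > 0" using edge_facts[OF e0] by auto
    have dpos: "\<delta> > 0" unfolding delta using rel_dist_pos[OF code nonzero] .
    have cp: "c > 0" unfolding c_def using dpos eps by simp
    define m where "m = 2 * c^2 * real d * real n"
    have mp: "m > 0" unfolding m_def using cp dp n2 by simp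
    define Q where "Q = E' // R"
    have "Q \<subseteq> (\<lambda>x. R `` {x}) ` E'" unfolding Q_def quotient_def by auto
    hence finQ: "finite Q" using finE' finite_subset by blast
    have cardE': "card E' = sum card Q"
    proof -
      have "\<Union>Q = E'" unfolding Q_def using Union_quotient[OF EQ] .
      moreover have "pairwise disjnt Q" unfolding Q_def pairwise_def disjnt_def
        using quotient_disj[OF EQ] by blast
      moreover have "\<And>X. X \<in> Q \<Longrightarrow> finite X" unfolding Q_def using EQ finE'
        by (metis Union_quotient Sup_upper finite_subset)
      ultimately show ?thesis using card_Union_disjoint by metis
    qed
    have "card (dc_edges Adj) = n * d"
    proof -
      have "dc_edges Adj = (SIGMA u:{..<n}. {w. Adj u w})" unfolding dc_edges_def using adjb by auto
      moreover have "\<forall>u\<in>{..<n}. finite {w. Adj u w}"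
        using adjb by (metis (no_types, lifting) finite_lessThan finite_subset lessThan_iff mem_Collect_eq subsetI)
      ultimately have "card (dc_edges Adj) = (\<Sum>u<n. card {w. Adj u w})" by (simp add: card_SigmaI)
      also have "\<dots> = (\<Sum>u<n. d)" using degd by simp
      finally show ?thesis by simp
    qed
    hence cardle: "card E' \<le> n * d" using card_mono[OF findc E'sub] by simp
    have "real (card Q) * m = (\<Sum>X\<in>Q. m)" by simp
    also have "\<dots> \<le> (\<Sum>X\<in>Q. real (card X))"
    proof (rule sum_mono)
      fix X assume "X \<in> Q"
      then obtain x where x: "x \<in> E'" "X = R `` {x}" unfolding Q_def by (auto elim: quotientE)
      show "m \<le> real (card X)" using main[OF x(1)] x(2) unfolding m_def by simp
    qed
    also have "\<dots> = real (card E')" using cardE' by simp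
    also have "\<dots> \<le> real n * real d" using cardle by (metis of_nat_le_iff of_nat_mult)
    finally have "real (card Q) * m \<le> real n * real d" .
    hence "real (card Q) \<le> real n * real d / m" using mp by (simp add: field_simps)
    also have "real n * real d / m = 1 / (2 * c^2)" unfolding m_def using dp n2 cp by (simp add: field_simps)
    also have "\<dots> = 2^(2*r+7) / (\<epsilon>^4 * \<delta>^4)"
    proof -
      have h1: "(2::real)^(2*r+7) = 2^r * 2^r * 128"
      proof -
        have e: "2*r+7 = r + r + 7" by simp
        show ?thesis unfolding e power_add by simp
      qed
      have h2: "(2::real)^(r+4) = 2^r * 16" by (simp add: power_add)
      show ?thesis unfolding c_def h1 h2 using dpos eps
        by (simp add: field_simps power4_eq_xxxx power2_eq_square)
    qed
    finally show ?thesis unfolding Q_def R_def .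
  qed
  show ?thesis using part1 part2 by blast
qed

end
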